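(* For $n\ge1$ let $a(n)$ be the number of nonempty words $\omega$ such that $\omega\omega$ is a suffix of $\mathbb{T}[1,n]$ and $\omega\omega$ is not a factor of $\mathbb{T}[1,n-1]$. For $n<14$, $a(n)=1$ if and only if $n\in\{8,10\}$. For $n\geq14$, let $m$ be such that $2t_{m-1}\leq n<2t_{m}$; then $m\geq4$ and $a(n)=1$ if and only if $$n\in\{2t_{m-1},\dots,t_{m}+2t_{m-3}-1\}\cup\{2t_{m}-t_{m-1},\dots,\tfrac{3t_{m}+t_{m-2}-3}{2}\}.$$
   Context: The Tribonacci sequence $\mathbb{T}=x_1x_2x_3\cdots$ is the fixed point (infinite word starting with $a$) of the substitution $\sigma(a)=ab$, $\sigma(b)=ac$, $\sigma(c)=a$ over $\{a,b,c\}$. For $n\ge1$, $\mathbb{T}[1,n]=x_1\cdots x_n$ is its prefix of length $n$ (and $\mathbb{T}[1,0]$ is the empty word). The Tribonacci numbers are $t_m=|\sigma^m(a)|$ for $m\ge0$, with $t_{-2}=0$, $t_{-1}=1$; thus $t_0=1,t_1=2,t_2=4$ and $t_m=t_{m-1}+t_{m-2}+t_{m-3}$. *)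

theory Defs
  imports Main "HOL-Library.Sublist"
begin

datatype letter = A | B | C

fun sigma_letter :: "letter \<Rightarrow> letter list" where
  "sigma_letter A = [A, B]"
| "sigma_letter B = [A, C]"
| "sigma_letter C = [A]"

definition sigma :: "letter list \<Rightarrow> letter list" where
  "sigma w = concat (map sigma_letter w)"

definition trib :: "nat \<Rightarrow> nat" where
  "trib m = length ((sigma ^^ m) [A])"

(* i-th letter (1-based) of the Tribonacci word: sigma^i(a) has length > i-1,
   and sigma^k(a) is a prefix of sigma^(k+1)(a), so this is the fixed point. *)
definition tword :: "nat \<Rightarrow> letter" where
  "tword i = (sigma ^^ i) [A] ! (i - 1)"

definition tpref :: "nat \<Rightarrow> letter list" where
  "tpref n = map tword [1..<n+1]"

definition acount :: "nat \<Rightarrow> nat" where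
  "acount n = card {w. w \<noteq> [] \<and> suffix (w @ w) (tpref n) \<and> \<not> sublist (w @ w) (tpref (n - 1))}"

end

theory Submission
  imports Defs
begin

lemma sigma_append[simp]: "sigma (u @ v) = sigma u @ sigma v"
  by (simp add: sigma_def)
lemma sigma_Nil[simp]: "sigma [] = []" by (simp add: sigma_def)
lemma sigma_Cons[simp]: "sigma (a # v) = sigma_letter a @ sigma v" by (simp add: sigma_def)

definition P :: "nat \<Rightarrow> letter list" where "P k = (sigma ^^ k) [A]"

lemma P_Suc: "P (Suc k) = sigma (P k)" by (simp add: P_def)
lemma P_0[simp]: "P 0 = [A]" by (simp add: P_def)

lemma trib_P: "trib k = length (P k)" by (simp add: trib_def P_def)

lemma P_rec: "P (k+3) = P (k+2) @ P (k+1) @ P k"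
proof (induction k)
  case 0 show ?case by (simp add: P_def numeral_eq_Suc)
next
  case (Suc k)
  have "P (Suc k + 3) = sigma (P (k+3))" by (metis P_Suc add_Suc)
  also have "\<dots> = sigma (P (k+2)) @ sigma (P (k+1)) @ sigma (P k)" using Suc by simp
  also have "\<dots> = P (Suc k + 2) @ P (Suc k + 1) @ P (Suc k)" by (simp add: P_Suc)
  finally show ?case .
qed

lemma trib_rec: "trib (k+3) = trib (k+2) + trib (k+1) + trib k"
  using P_rec[of k] by (simp add: trib_P)

lemma trib_0[simp]: "trib 0 = 1" by (simp add: trib_P)
lemma trib_1[simp]: "trib 1 = 2" by (simp add: trib_P P_def)
lemma trib_2[simp]: "trib 2 = 4" by (simp add: trib_P P_def numeral_eq_Suc)

lemma sigma_prefix: "prefix u v \<Longrightarrow> prefix (sigma u) (sigma v)"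
  by (auto simp: prefix_def)

lemma P_prefix_Suc: "prefix (P k) (P (Suc k))"
proof (induction k)
  case 0 show ?case by (simp add: P_def)
next
  case (Suc k) thus ?case using sigma_prefix by (simp add: P_Suc)
qed

lemma P_prefix: "k \<le> k' \<Longrightarrow> prefix (P k) (P k')"
proof (induction k' rule: dec_induct)
  case base then show ?case by simp
next
  case (step n) then show ?case using P_prefix_Suc prefix_order.trans by blast
qed

lemma length_sigma_ge: "length (sigma w) \<ge> length w"
proof (induction w)
  case (Cons a w) then show ?case by (cases a) auto
qed simp

lemma trib_pos: "trib k > 0"
proof (induction k)
  case (Suc k) then show ?case unfolding trib_P P_Suc using length_sigma_ge[of "P k"] by linarith
qed (simp)

lemma trib_Suc_gt: "trib (Suc k) > trib k"
proof -
  have "k = 0 \<or> k = 1 \<or> (\<exists>j. k = j + 2)" by presburger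
  then show ?thesis
  proof (elim disjE exE)
    fix j assume "k = j + 2" then show ?thesis using trib_rec[of "j"] trib_pos[of j] by (simp add: numeral_eq_Suc)
  qed (auto simp: trib_P P_def)
qed

lemma trib_mono: "k < k' \<Longrightarrow> trib k < trib k'"
  using trib_Suc_gt by (meson lift_Suc_mono_less)

lemma trib_ge: "trib k \<ge> Suc k"
proof (induction k)
  case (Suc k) then show ?case using trib_Suc_gt[of k] by linarith
qed simp

definition x :: "nat \<Rightarrow> letter" where "x i = tword (Suc i)"

lemma prefix_nth': "prefix u v \<Longrightarrow> i < length u \<Longrightarrow> v ! i = u ! i"
  by (auto simp: prefix_def nth_append)

lemma x_P: "i < trib k \<Longrightarrow> x i = P k ! i"
proof -
  assume a: "i < trib k"
  have xi: "x i = P (Suc i) ! i" unfolding x_def tword_def P_def by simp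
  have il: "i < length (P (Suc i))" using trib_ge[of "Suc i"] by (simp add: trib_P)
  show ?thesis
  proof (cases "k \<le> Suc i")
    case True
    have "i < length (P k)" using a by (simp add: trib_P)
    from prefix_nth'[OF P_prefix[OF True] this] xi show ?thesis by simp
  next
    case False
    then have "Suc i \<le> k" by simp
    from prefix_nth'[OF P_prefix[OF this] il] xi show ?thesis by simp
  qed
qed

definition pre :: "nat \<Rightarrow> letter list" where "pre n = map x [0..<n]"

lemma tpref_pre: "tpref n = pre n"
proof -
  have "[1..<n+1] = map Suc [0..<n]" by (simp add: map_Suc_upt)
  then show ?thesis unfolding tpref_def pre_def x_def by simp
qed

lemma length_pre[simp]: "length (pre n) = n" by (simp add: pre_def)
lemma nth_pre[simp]: "i < n \<Longrightarrow> pre n ! i = x i" by (simp add: pre_def)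

lemma pre_P: "pre (trib k) = P k"
proof (rule nth_equalityI)
  show "length (pre (trib k)) = length (P k)" by (simp add: trib_P)
  fix i assume "i < length (pre (trib k))"
  then have i: "i < trib k" by simp
  have "pre (trib k) ! i = x i" using i by (rule nth_pre)
  also have "\<dots> = P k ! i" using i by (rule x_P)
  finally show "pre (trib k) ! i = P k ! i" .
qed

lemma pre_take: "n \<le> trib k \<Longrightarrow> pre n = take n (P k)"
proof (rule nth_equalityI)
  assume "n \<le> trib k"
  then show "length (pre n) = length (take n (P k))" by (simp add: trib_P)
  fix i assume "i < length (pre n)"
  then have i: "i < n" by simp
  have "pre n ! i = x i" using i by (rule nth_pre)
  also have "\<dots> = P k ! i" using i \<open>n \<le> trib k\<close> by (intro x_P) simp
  finally show "pre n ! i = take n (P k) ! i" using i by simp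
qed

lemma pre_add: "pre (a + b) = pre a @ map x [a..<a+b]"
  unfolding pre_def using upt_add_eq_append[of 0 a b] by simp

lemma P3: "P 3 = [A,B,A,C,A,B,A]" by (simp add: P_def numeral_eq_Suc)
lemma trib3[simp]: "trib 3 = 7" by (simp add: trib_P P3)

lemma x_small: "x 0 = A" "x 1 = B" "x 2 = A" "x 3 = C" "x 4 = A" "x 5 = B" "x 6 = A"
  by (simp_all add: x_P[where k=3] P3)

lemma x_small'[simp]: "x 0 = A" "x (Suc 0) = B" "x 2 = A" "x 3 = C" "x 4 = A" "x 5 = B" "x 6 = A"
  using x_small by simp_all

lemma trib_Suc0[simp]: "trib (Suc 0) = 2" and trib_Suc1[simp]: "trib (Suc (Suc 0)) = 4"
  using trib_1 trib_2 by (simp_all add: numeral_eq_Suc)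

definition h :: "nat \<Rightarrow> nat" where "h N = length (sigma (pre N))"

lemma pre_h: "pre (h N) = sigma (pre N)"
proof -
  have N: "N \<le> trib N" using trib_ge[of N] by simp
  have pN: "pre N = take N (P N)" using pre_take[OF N] .
  have pref: "prefix (sigma (pre N)) (P (Suc N))"
    unfolding pN P_Suc by (rule sigma_prefix) (rule take_is_prefix)
  then have hl: "h N \<le> trib (Suc N)" unfolding h_def trib_P by (rule prefix_length_le)
  have "pre (h N) = take (h N) (P (Suc N))" using pre_take[OF hl] .
  also have "\<dots> = sigma (pre N)" using pref unfolding h_def
    by (metis append_eq_conv_conj prefix_def)
  finally show ?thesis .
qed

fun f :: "letter \<Rightarrow> letter" where "f A = B" | "f B = C" | "f C = A"

fun llen :: "letter \<Rightarrow> nat" where "llen A = 2" | "llen B = 2" | "llen C = 1"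

lemma length_sigma_letter: "length (sigma_letter a) = llen a" by (cases a) auto

lemma h_0[simp]: "h 0 = 0" by (simp add: h_def pre_def)

lemma h_Suc: "h (Suc N) = h N + llen (x N)"
  by (simp add: h_def pre_def length_sigma_letter)

lemma llen_pos: "llen a \<ge> 1" by (cases a) auto

lemma h_mono_Suc: "h N < h (Suc N)" using h_Suc[of N] llen_pos[of "x N"] by simp

lemma h_strict: "a < b \<Longrightarrow> h a < h b"
  using h_mono_Suc by (meson lift_Suc_mono_less)

lemma h_mono: "a \<le> b \<Longrightarrow> h a \<le> h b"
  using h_strict by (metis le_eq_less_or_eq)

lemma h_ge: "N \<ge> 1 \<Longrightarrow> h N \<ge> N + 1"
proof (induction N)
  case 0 then show ?case by simp
next
  case (Suc N)
  show ?case
  proof (cases N)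
    case 0 then show ?thesis using x_small by (simp add: h_Suc)
  next
    case (Suc M) then show ?thesis using Suc.IH h_mono_Suc[of N] by simp
  qed
qed

lemma pre_Suc: "pre (Suc N) = pre N @ [x N]" by (simp add: pre_def)

lemma pre_split_nth: "pre n = u @ v \<Longrightarrow> i < length v \<Longrightarrow> x (length u + i) = v ! i"
proof -
  assume e: "pre n = u @ v" and i: "i < length v"
  have "length u + i < n" using e i by (metis length_append length_pre nat_add_left_cancel_less)
  then have "x (length u + i) = pre n ! (length u + i)" by simp
  also have "\<dots> = v ! i" using e by simp
  finally show ?thesis .
qed

lemma x_h: "x (h N) = A \<and> x (h N + 1) = f (x N)"
proof -
  have e: "pre (h (Suc (Suc N))) = sigma (pre N) @ (sigma_letter (x N) @ sigma_letter (x (Suc N)))"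
    by (simp add: pre_h pre_Suc)
  have hl: "length (sigma (pre N)) = h N" by (simp add: h_def)
  have "x (h N) = A"
    using pre_split_nth[OF e, of 0] hl by (cases "x N") auto
  moreover have "x (h N + 1) = f (x N)"
    using pre_split_nth[OF e, of 1] hl by (cases "x N"; cases "x (Suc N)") auto
  ultimately show ?thesis by simp
qed

lemma x_hA: "x (h N) = A" using x_h by simp
lemma x_h1: "x (h N + 1) = f (x N)" using x_h by simp

lemma x_before_h: "N \<ge> 1 \<Longrightarrow> x (h N - 1) = f (x (N - 1))"
proof -
  assume "N \<ge> 1"
  then obtain M where M: "N = Suc M" by (cases N) auto
  have e: "pre (h (Suc M)) = sigma (pre M) @ sigma_letter (x M)"
    by (simp add: pre_h pre_Suc)
  have hl: "length (sigma (pre M)) = h M" by (simp add: h_def)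
  have "x (h (Suc M) - 1) = f (x M)"
  proof (cases "x M")
    case A
    then have "h (Suc M) - 1 = h M + 1" using h_Suc[of M] by simp
    then show ?thesis using pre_split_nth[OF e, of 1] hl A by simp
  next
    case B
    then have "h (Suc M) - 1 = h M + 1" using h_Suc[of M] by simp
    then show ?thesis using pre_split_nth[OF e, of 1] hl B by simp
  next
    case C
    then have "h (Suc M) - 1 = h M + 0" using h_Suc[of M] by simp
    then show ?thesis using pre_split_nth[OF e, of 0] hl C by simp
  qed
  then show ?thesis using M by simp
qed

lemma h_unbounded: "p < h (Suc p)" using h_ge[of "Suc p"] by simp

lemma block: "\<exists>N. h N \<le> p \<and> p < h (Suc N)"
proof -
  define N' where "N' = (LEAST N. p < h N)"
  have ex: "p < h N'" unfolding N'_def by (rule LeastI[of _ "Suc p"]) (rule h_unbounded)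
  have "N' \<noteq> 0" using ex by (metis h_0 not_less0)
  then obtain N where N: "N' = Suc N" by (cases N') auto
  have "\<not> p < h N" using not_less_Least[of N "\<lambda>N. p < h N"] N unfolding N'_def by simp
  then show ?thesis using ex N by (intro exI[of _ N]) (simp add: not_less)
qed

lemma block_pos: "h N \<le> p \<Longrightarrow> p < h (Suc N) \<Longrightarrow> p = h N \<or> (p = h N + 1 \<and> x N \<noteq> C)"
  using h_Suc[of N] by (cases "x N") auto

lemma A_is_h: "x p = A \<Longrightarrow> \<exists>N. p = h N"
proof -
  assume a: "x p = A"
  obtain N where "h N \<le> p" "p < h (Suc N)" using block by blast
  from block_pos[OF this] show ?thesis
  proof
    assume "p = h N + 1 \<and> x N \<noteq> C"
    then have "x p = f (x N)" "x N \<noteq> C" using x_h1 by auto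
    then have "x p \<noteq> A" by (cases "x N") auto
    then show ?thesis using a by simp
  qed blast
qed

lemma nonA_prev: "x p \<noteq> A \<Longrightarrow> p \<ge> 1 \<and> x (p - 1) = A"
proof -
  assume a: "x p \<noteq> A"
  obtain N where "h N \<le> p" "p < h (Suc N)" using block by blast
  from block_pos[OF this] show ?thesis
  proof
    assume "p = h N" then show ?thesis using a x_hA by simp
  next
    assume "p = h N + 1 \<and> x N \<noteq> C" then show ?thesis using x_hA by simp
  qed
qed

lemma f_inj: "f a = f b \<Longrightarrow> a = b" by (cases a; cases b) auto

lemma seg_sigma: "a \<le> b \<Longrightarrow> map x [h a..<h b] = sigma (map x [a..<b])"
proof -
  assume ab: "a \<le> b"
  then obtain c where c: "b = a + c" using le_Suc_ex by blast
  have "h a \<le> h b" using h_mono[OF ab] .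
  then obtain d where d: "h b = h a + d" using le_Suc_ex by blast
  have "pre (h b) = pre (h a) @ map x [h a..<h b]" using pre_add[of "h a" d] d by simp
  moreover have "pre (h b) = sigma (pre a) @ sigma (map x [a..<b])"
    using pre_add[of a c] c by (simp add: pre_h)
  ultimately show ?thesis by (simp add: pre_h)
qed

definition agree :: "nat \<Rightarrow> nat \<Rightarrow> bool" where "agree j L = (\<forall>i<L. x (j+i) = x i)"

lemma agree_seg: "agree j L \<longleftrightarrow> map x [j..<j+L] = pre L"
proof
  assume "agree j L" then show "map x [j..<j+L] = pre L"
    by (intro nth_equalityI) (auto simp: agree_def)
next
  assume a: "map x [j..<j+L] = pre L"
  show "agree j L" unfolding agree_def
  proof (intro allI impI)
    fix i assume "i < L"
    then have "map x [j..<j+L] ! i = pre L ! i" using a by simp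
    then show "x (j+i) = x i" using \<open>i < L\<close> by simp
  qed
qed

lemma h_add: "agree a b \<Longrightarrow> h (a + b) = h a + h b"
proof -
  assume "agree a b"
  then have "map x [a..<a+b] = pre b" by (simp add: agree_seg)
  then have "sigma (map x [a..<a+b]) = sigma (pre b)" by simp
  then have "map x [h a..<h (a+b)] = pre (h b)" using seg_sigma[of a "a+b"] by (simp add: pre_h)
  then have "h (a+b) - h a = h b" by (metis length_map length_upt length_pre)
  then show ?thesis using h_mono[of a "a+b"] by simp
qed

lemma agree_h: "agree j L \<Longrightarrow> agree (h j) (h L)"
proof -
  assume a: "agree j L"
  then have "map x [j..<j+L] = pre L" by (simp add: agree_seg)
  then have "map x [h j..<h (j+L)] = pre (h L)" using seg_sigma[of j "j+L"] by (simp add: pre_h)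
  then show ?thesis using h_add[OF a] by (simp add: agree_seg)
qed

lemma lcp_step: "agree j L \<Longrightarrow> x (j+L) \<noteq> x L \<Longrightarrow>
   agree (h j) (h L + 1) \<and> x (h j + (h L + 1)) \<noteq> x (h L + 1)"
proof -
  assume a: "agree j L" and m: "x (j+L) \<noteq> x L"
  have e: "h (j+L) = h j + h L" using h_add[OF a] .
  have "x (h j + h L) = x (h L)" using x_hA[of "j+L"] x_hA[of L] e by simp
  then have ag: "agree (h j) (h L + 1)" using agree_h[OF a] unfolding agree_def
    by (metis less_Suc_eq Suc_eq_plus1)
  have "x (h j + (h L + 1)) = f (x (j+L))" using x_h1[of "j+L"] e by (simp add: add.assoc)
  moreover have "x (h L + 1) = f (x L)" by (rule x_h1)
  ultimately have "x (h j + (h L + 1)) \<noteq> x (h L + 1)" using m f_inj by metis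
  with ag show ?thesis by simp
qed

definition lcp :: "nat \<Rightarrow> nat" where "lcp j = (LEAST L. x (j+L) \<noteq> x L)"

lemma lcp_eq: "agree j L \<Longrightarrow> x (j+L) \<noteq> x L \<Longrightarrow> lcp j = L"
  unfolding lcp_def
proof (rule Least_equality)
  fix y assume "agree j L" "x (j + y) \<noteq> x y"
  then show "L \<le> y" unfolding agree_def using not_less by blast
qed

lemma lcp_exists: "j \<ge> 1 \<Longrightarrow> \<exists>L. agree j L \<and> x (j+L) \<noteq> x L"
proof (induction j rule: less_induct)
  case (less j)
  show ?case
  proof (cases "x j = A")
    case False
    then show ?thesis using x_small by (intro exI[of _ 0]) (simp add: agree_def)
  next
    case True
    then obtain j' where j': "j = h j'" using A_is_h by blast
    have "j' \<noteq> 0" using j' less.prems by (metis h_0 not_one_le_zero)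
    then have "j' < j" using h_ge[of j'] j' by simp
    then obtain L where "agree j' L" "x (j'+L) \<noteq> x L" using less.IH[OF \<open>j' < j\<close>] \<open>j' \<noteq> 0\<close> by auto
    from lcp_step[OF this] show ?thesis using j' by blast
  qed
qed

lemma lcp_spec: "j \<ge> 1 \<Longrightarrow> agree j (lcp j) \<and> x (j + lcp j) \<noteq> x (lcp j)"
  using lcp_exists lcp_eq by metis

lemma agree_iff: "j \<ge> 1 \<Longrightarrow> agree j L \<longleftrightarrow> L \<le> lcp j"
proof
  assume j: "j \<ge> 1" and "agree j L"
  then show "L \<le> lcp j" using lcp_spec[OF j] unfolding agree_def using not_less by blast
next
  assume j: "j \<ge> 1" and "L \<le> lcp j"
  then show "agree j L" using lcp_spec[OF j] unfolding agree_def by auto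
qed

lemma lcp_h: "j \<ge> 1 \<Longrightarrow> lcp (h j) = h (lcp j) + 1"
  using lcp_spec lcp_step lcp_eq by metis

definition S :: "nat \<Rightarrow> nat" where "S k = (\<Sum>i<k. trib i)"

lemma S_0[simp]: "S 0 = 0" by (simp add: S_def)
lemma S_Suc: "S (Suc k) = S k + trib k" by (simp add: S_def)

lemma trib_Ta: "trib (J+2) \<ge> trib (J+1) + trib J"
proof (cases J)
  case 0 then show ?thesis by simp
next
  case (Suc I) then show ?thesis using trib_rec[of I] by (simp add: numeral_eq_Suc)
qed

lemma trib_Tb: "trib (Suc K) \<le> 2 * trib K"
proof -
  have "K = 0 \<or> K = 1 \<or> (\<exists>J. K = J + 2)" by presburger
  then show ?thesis
  proof (elim disjE exE)
    fix J assume K: "K = J + 2"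
    have "trib (J+3) = trib (J+2) + trib (J+1) + trib J" by (rule trib_rec)
    moreover have "trib (J+2) \<ge> trib (J+1) + trib J" by (rule trib_Ta)
    ultimately show ?thesis using K by (simp add: numeral_eq_Suc)
  qed (auto simp: numeral_eq_Suc trib_P P_def)
qed

lemma trib_Tc: "3 * trib K \<le> 2 * trib (Suc K)"
proof -
  have "K = 0 \<or> K = 1 \<or> (\<exists>J. K = J + 2)" by presburger
  then show ?thesis
  proof (elim disjE exE)
    fix J assume K: "K = J + 2"
    have "trib (J+3) = trib (J+2) + trib (J+1) + trib J" by (rule trib_rec)
    moreover have "trib (J+2) \<le> 2 * trib (J+1)" using trib_Tb[of "J+1"] by simp
    ultimately show ?thesis using K by (simp add: numeral_eq_Suc)
  qed (auto simp: numeral_eq_Suc trib_P P_def)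
qed

lemma S_lt: "S K + 1 \<le> trib (Suc K)"
proof (induction K)
  case 0 then show ?case by simp
next
  case (Suc K) then show ?case using trib_Ta[of K] S_Suc[of K] by (simp add: numeral_eq_Suc)
qed

lemma S_ge: "trib K \<le> S K + 1"
proof (induction K)
  case 0 then show ?case by simp
next
  case (Suc K) then show ?case using trib_Tb[of K] S_Suc[of K] by simp
qed

lemma S_lt2: "S K < 2 * trib K"
proof (induction K)
  case 0 then show ?case by simp
next
  case (Suc K) then show ?case using trib_Tc[of K] S_Suc[of K] by simp
qed

lemma S3: "S (K+3) = trib (K+3) + S K"
  using trib_rec[of K] by (simp add: S_Suc numeral_eq_Suc)

lemma S_mono: "a \<le> b \<Longrightarrow> S a \<le> S b"
  unfolding S_def by (rule sum_mono2) auto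

lemma S_div: "2 * S (K+2) + 3 = trib (K+3) + trib (K+1)"
proof (induction K)
  case 0 then show ?case by (simp add: S_def numeral_eq_Suc trib_P P_def)
next
  case (Suc K)
  have "S (Suc K + 2) = S (K+2) + trib (K+2)" by (simp add: S_Suc)
  moreover have "trib (Suc K + 3) = trib (K+3) + trib (K+2) + trib (K+1)"
    using trib_rec[of "Suc K"] by (simp add: numeral_eq_Suc)
  ultimately show ?case using Suc by (simp add: numeral_eq_Suc)
qed

lemma h_trib: "h (trib k) = trib (Suc k)"
proof -
  have "h (trib k) = length (sigma (P k))" unfolding h_def pre_P ..
  also have "\<dots> = trib (Suc k)" by (simp add: trib_P P_Suc)
  finally show ?thesis .
qed

lemma lcp_1: "lcp 1 = 0" by (rule lcp_eq) (auto simp: agree_def x_small)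
lemma lcp_3: "lcp 3 = 0" by (rule lcp_eq) (auto simp: agree_def x_small)
lemma lcp_5: "lcp 5 = 0" by (rule lcp_eq) (auto simp: agree_def x_small)

lemma lcp_trib_aux: "lcp (trib k) = S k \<and> h (S k) + 1 = S (Suc k)"
proof (induction k)
  case 0 then show ?case using lcp_1 by (simp add: S_Suc)
next
  case (Suc k)
  have t1: "trib k \<ge> 1" using trib_pos[of k] by simp
  have "lcp (trib (Suc k)) = lcp (h (trib k))" by (simp add: h_trib)
  also have "\<dots> = h (lcp (trib k)) + 1" using lcp_h[OF t1] .
  also have "\<dots> = S (Suc k)" using Suc by simp
  finally have a: "lcp (trib (Suc k)) = S (Suc k)" .
  have ag: "agree (trib k) (S k)" using agree_iff[OF t1] Suc by simp
  have "h (S (Suc k)) = h (trib k + S k)" by (simp add: S_Suc add.commute)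
  also have "\<dots> = h (trib k) + h (S k)" using h_add[OF ag] .
  finally have "h (S (Suc k)) + 1 = trib (Suc k) + S (Suc k)" using Suc by (simp add: h_trib)
  then show ?case using a by (simp add: S_Suc[of "Suc k"])
qed

lemma lcp_trib: "lcp (trib k) = S k" using lcp_trib_aux by simp
lemma h_S: "h (S k) + 1 = S (Suc k)" using lcp_trib_aux by simp

lemma agree_trib: "agree (trib k) (S k)"
  using agree_iff[of "trib k" "S k"] trib_pos[of k] lcp_trib[of k] by simp

lemma lcp_trib2: "lcp (trib (Suc k) + trib k) = S k"
proof (induction k)
  case 0 then show ?case using lcp_3 by simp
next
  case (Suc k)
  have ag: "agree (trib (Suc k)) (trib k)"
    using agree_iff[of "trib (Suc k)" "trib k"] trib_pos[of "Suc k"] lcp_trib[of "Suc k"] S_Suc[of k]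
    by simp
  have e: "trib (Suc (Suc k)) + trib (Suc k) = h (trib (Suc k) + trib k)"
    using h_add[OF ag] by (simp add: h_trib)
  have p: "trib (Suc k) + trib k \<ge> 1" using trib_pos[of k] by simp
  have "lcp (trib (Suc (Suc k)) + trib (Suc k)) = h (lcp (trib (Suc k) + trib k)) + 1"
    using e lcp_h[OF p] by simp
  also have "\<dots> = S (Suc k)" using Suc h_S by simp
  finally show ?case .
qed

lemma agree_trib2: "agree (trib (Suc k) + trib k) (S k)"
  using agree_iff[of "trib (Suc k) + trib k" "S k"] trib_pos[of k] lcp_trib2[of k] by simp

lemma shift: "agree p M \<Longrightarrow> e \<ge> 1 \<Longrightarrow> e + lcp e < M \<Longrightarrow> lcp (p + e) = lcp e"
proof -
  assume ag: "agree p M" and e: "e \<ge> 1" and l: "e + lcp e < M"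
  have s: "agree e (lcp e)" "x (e + lcp e) \<noteq> x (lcp e)" using lcp_spec[OF e] by auto
  show ?thesis
  proof (rule lcp_eq)
    show "agree (p + e) (lcp e)" unfolding agree_def
    proof (intro allI impI)
      fix i assume i: "i < lcp e"
      have "x (p + (e + i)) = x (e + i)" using ag l i unfolding agree_def by simp
      also have "\<dots> = x i" using s i unfolding agree_def by simp
      finally show "x (p + e + i) = x i" by (simp add: add.assoc)
    qed
    have "x (p + (e + lcp e)) = x (e + lcp e)" using ag l unfolding agree_def by simp
    then show "x (p + e + lcp e) \<noteq> x (lcp e)" using s by (simp add: add.assoc)
  qed
qed

lemma F2: "1 \<le> j \<Longrightarrow> j < trib k \<Longrightarrow> j + lcp j \<le> S k"
proof (induction k arbitrary: j rule: less_induct)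
  case (less k)
  show ?case
  proof (cases "k < 3")
    case True
    then have "k = 0 \<or> k = 1 \<or> k = 2" by auto
    then show ?thesis
    proof (elim disjE)
      assume "k = 1" then have "j = 1" using less.prems by simp
      then show ?thesis using lcp_1 \<open>k = 1\<close> by (simp add: S_def)
    next
      assume k: "k = 2"
      then have "j = 1 \<or> j = 2 \<or> j = 3" using less.prems by auto
      then show ?thesis using k lcp_1 lcp_3 lcp_trib[of 1]
        by (auto simp: S_def numeral_eq_Suc)
    qed (use less.prems in auto)
  next
    case False
    then obtain K where K: "k = K + 3" by (metis add.commute le_Suc_ex not_less)
    have IH: "\<And>j k'. k' < k \<Longrightarrow> 1 \<le> j \<Longrightarrow> j < trib k' \<Longrightarrow> j + lcp j \<le> S k'" using less.IH by blast
    have tr: "trib (K+3) = trib (K+2) + trib (K+1) + trib K" by (rule trib_rec)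
    have S2: "S (K+2) = S (K+1) + trib (K+1)" by (simp add: S_Suc numeral_eq_Suc)
    have S1: "S (K+1) = S K + trib K" by (simp add: S_Suc numeral_eq_Suc)
    have S3': "S (K+3) = S (K+2) + trib (K+2)" by (simp add: S_Suc numeral_eq_Suc)
    consider "j < trib (K+2)" | "j = trib (K+2)" | "trib (K+2) < j" "j < trib (K+2) + trib (K+1)"
      | "j = trib (K+2) + trib (K+1)" | "trib (K+2) + trib (K+1) < j" by linarith
    then show ?thesis
    proof cases
      case 1 then show ?thesis using IH[of "K+2" j] less.prems K S3' by simp
    next
      case 2 then show ?thesis using lcp_trib[of "K+2"] K S3' by simp
    next
      case 3
      define e where "e = j - trib (K+2)"
      have e1: "1 \<le> e" "e < trib (K+1)" using 3 e_def by auto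
      have b: "e + lcp e \<le> S (K+1)" using IH[of "K+1" e] e1 K by simp
      have "lcp j = lcp e" using shift[OF agree_trib[of "K+2"] e1(1)] b S2 trib_pos[of "K+1"] e_def 3
        by simp
      then show ?thesis using b e_def 3 K S3' S2 by simp
    next
      case 4 then show ?thesis using lcp_trib2[of "K+1"] K S3' S2 by simp
    next
      case 5
      define e where "e = j - (trib (K+2) + trib (K+1))"
      have e1: "1 \<le> e" "e < trib K" using 5 e_def less.prems K tr by auto
      have b: "e + lcp e \<le> S K" using IH[of K e] e1 K by simp
      have "lcp j = lcp e" using shift[OF agree_trib2[of "K+1"] e1(1)] b S1 trib_pos[of K] e_def 5
        by (simp add: add.commute)
      then show ?thesis using b e_def 5 K S3' S2 S1 by simp
    qed
  qed
qed

lemma S_rel: "S (K+1) = S K + trib K" "S (K+2) = S (K+1) + trib (K+1)" "S (K+3) = S (K+2) + trib (K+2)"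
  by (simp_all add: S_Suc numeral_eq_Suc)

lemma decomp:
  assumes "1 \<le> j" "j < trib (K+3)"
  shows "j < trib (K+2) \<or> j = trib (K+2) \<or>
    (\<exists>e. 1 \<le> e \<and> e < trib (K+1) \<and> j = trib (K+2) + e \<and> lcp j = lcp e) \<or>
    j = trib (K+2) + trib (K+1) \<or>
    (\<exists>e. 1 \<le> e \<and> e < trib K \<and> j = trib (K+2) + trib (K+1) + e \<and> lcp j = lcp e)"
proof -
  have tr: "trib (K+3) = trib (K+2) + trib (K+1) + trib K" by (rule trib_rec)
  note Sr = S_rel[of K]
  consider "j < trib (K+2)" | "j = trib (K+2)" | "trib (K+2) < j" "j < trib (K+2) + trib (K+1)"
    | "j = trib (K+2) + trib (K+1)" | "trib (K+2) + trib (K+1) < j" by linarith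
  then show ?thesis
  proof cases
    case 3
    define e where "e = j - trib (K+2)"
    have e1: "1 \<le> e" "e < trib (K+1)" using 3 e_def by auto
    have b: "e + lcp e \<le> S (K+1)" using F2[of e "K+1"] e1 by simp
    have "lcp j = lcp e" using shift[OF agree_trib[of "K+2"] e1(1)] b Sr trib_pos[of "K+1"] e_def 3
      by simp
    then show ?thesis using e1 e_def 3 by force
  next
    case 5
    define e where "e = j - (trib (K+2) + trib (K+1))"
    have e1: "1 \<le> e" "e < trib K" using 5 e_def assms tr by auto
    have b: "e + lcp e \<le> S K" using F2[of e K] e1 by simp
    have "lcp j = lcp e" using shift[OF agree_trib2[of "K+1"] e1(1)] b Sr trib_pos[of K] e_def 5
      by (simp add: add.commute)
    then show ?thesis using e1 e_def 5 by force
  qed auto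
qed

lemma U: "1 \<le> e \<Longrightarrow> e < trib (Suc i) \<Longrightarrow> lcp e \<le> S i"
proof (induction i arbitrary: e)
  case 0 then have "e = 1" by simp
  then show ?case using lcp_1 by simp
next
  case (Suc i)
  show ?case
  proof (cases "e < trib (Suc i)")
    case True then show ?thesis using Suc S_Suc[of i] by fastforce
  next
    case False
    then show ?thesis using F2[of e "Suc (Suc i)"] Suc.prems S_Suc[of "Suc i"] by simp
  qed
qed

lemma LS: "1 \<le> j \<Longrightarrow> j < trib (K+3) \<Longrightarrow> lcp j > S K \<Longrightarrow>
   j = trib (K+1) \<or> j = trib (K+2) \<or> j = trib (K+2) + trib (K+1)"
proof (induction K arbitrary: j)
  case 0
  then have "j < 7" by simp
  then have "j = 1 \<or> j = 2 \<or> j = 3 \<or> j = 4 \<or> j = 5 \<or> j = 6" using 0 by linarith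
  then show ?case using 0 lcp_1 lcp_3 lcp_5 by auto
next
  case (Suc K)
  have S1: "S K \<le> S (Suc K)" by (simp add: S_Suc)
  from decomp[of j "Suc K", OF Suc.prems(1,2)] show ?case
  proof (elim disjE exE conjE)
    assume j: "j < trib (Suc K + 2)"
    then have "j = trib (K+1) \<or> j = trib (K+2) \<or> j = trib (K+2) + trib (K+1)"
      using Suc.IH[of j] Suc.prems S1 by (simp add: numeral_eq_Suc)
    moreover have "lcp (trib (K+1)) = S (Suc K)" using lcp_trib by simp
    moreover have "lcp (trib (K+2) + trib (K+1)) = S (Suc K)" using lcp_trib2[of "K+1"] by simp
    ultimately show ?thesis using Suc.prems by (auto simp: numeral_eq_Suc)
  next
    fix e assume "1 \<le> e" "e < trib (Suc K + 1)" "lcp j = lcp e"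
    then show ?thesis using U[of e "Suc K"] Suc.prems by simp
  next
    fix e assume "1 \<le> e" "e < trib (Suc K)" "lcp j = lcp e"
    then show ?thesis using U[of e K] Suc.prems S1 by simp
  qed (auto simp: numeral_eq_Suc)
qed

lemma HG: "1 \<le> j \<Longrightarrow> j < trib (K+3) \<Longrightarrow> j + lcp j \<ge> trib (K+3) + trib K \<Longrightarrow>
   j = trib (K+2) \<or> j = trib (K+2) + trib (K+1)"
proof -
  assume a: "1 \<le> j" "j < trib (K+3)" "j + lcp j \<ge> trib (K+3) + trib K"
  have tr: "trib (K+3) = trib (K+2) + trib (K+1) + trib K" by (rule trib_rec)
  note Sr = S_rel[of K]
  have s1: "S K + 1 \<le> trib (K+1)" using S_lt[of K] by simp
  have s2: "S (K+2) + 1 \<le> trib (K+3)" using S_lt[of "K+2"] by (simp add: numeral_eq_Suc)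
  from decomp[OF a(1,2)] show ?thesis
  proof (elim disjE exE conjE)
    assume "j < trib (K+2)"
    then show ?thesis using F2[of j "K+2"] a s2 by simp
  next
    fix e assume e: "1 \<le> e" "e < trib (K+1)" "j = trib (K+2) + e" "lcp j = lcp e"
    then show ?thesis using F2[of e "K+1"] a s1 Sr tr by simp
  next
    fix e assume e: "1 \<le> e" "e < trib K" "j = trib (K+2) + trib (K+1) + e" "lcp j = lcp e"
    then show ?thesis using F2[of e K] a S_lt2[of K] tr by simp
  qed auto
qed

lemma h_diff: "h (a + i) \<ge> h a + i"
proof (induction i)
  case (Suc i) then show ?case using h_mono_Suc[of "a+i"] by simp
qed simp

lemma R1: "p \<ge> 1 \<Longrightarrow> q \<ge> 1 \<Longrightarrow> x (p-1) \<noteq> x (q-1) \<Longrightarrow> (\<forall>i<c. x (p+i) = x (q+i)) \<Longrightarrow> agree p c"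
proof (induction c arbitrary: p q rule: less_induct)
  case (less c)
  show ?case
  proof (cases "c = 0")
    case True then show ?thesis by (simp add: agree_def)
  next
    case False
    have w: "\<And>i. i < c \<Longrightarrow> x (p+i) = x (q+i)" using less.prems(4) by blast
    have xpq: "x p = x q" using w[of 0] False by simp
    have xpA: "x p = A"
    proof (rule ccontr)
      assume "x p \<noteq> A"
      then have "x (p-1) = A" "x (q-1) = A" using nonA_prev[of p] nonA_prev[of q] xpq by auto
      then show False using less.prems(3) by simp
    qed
    obtain p' where p': "p = h p'" using A_is_h[OF xpA] by blast
    obtain q' where q': "q = h q'" using A_is_h[of q] xpA xpq by auto
    have p'1: "p' \<ge> 1" using p' less.prems(1) by (cases p') auto
    have q'1: "q' \<ge> 1" using q' less.prems(2) by (cases q') auto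
    have prev: "x (p'-1) \<noteq> x (q'-1)"
      using x_before_h[OF p'1] x_before_h[OF q'1] less.prems(3) p' q' by auto
    define c' where "c' = (LEAST i. h (p'+i) + 1 \<ge> p + c)"
    have ex: "h (p' + (c-1)) + 1 \<ge> p + c" using h_diff[of p' "c-1"] p' False by simp
    have c'le: "c' \<le> c - 1" unfolding c'_def using ex by (rule Least_le)
    have c'ex: "h (p' + c') + 1 \<ge> p + c" unfolding c'_def using ex by (rule LeastI)
    have below: "\<And>i. i < c' \<Longrightarrow> h (p'+i) + 1 < p + c"
      using not_less_Least unfolding c'_def by (metis not_le)
    have claim: "\<And>i. i \<le> c' \<Longrightarrow> h (q'+i) + p = h (p'+i) + q \<and> (\<forall>i'<i. x (p'+i') = x (q'+i'))"
    proof -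
      fix i assume "i \<le> c'"
      then show "h (q'+i) + p = h (p'+i) + q \<and> (\<forall>i'<i. x (p'+i') = x (q'+i'))"
      proof (induction i)
        case 0 then show ?case using p' q' by simp
      next
        case (Suc i)
        then have IH: "h (q'+i) + p = h (p'+i) + q" "\<forall>i'<i. x (p'+i') = x (q'+i')" by auto
        have lt: "h (p'+i) + 1 < p + c" using below Suc.prems by simp
        have hp: "h (p'+i) \<ge> p" using h_mono[of p' "p'+i"] p' by simp
        define r where "r = h (p'+i) - p"
        have r: "h (p'+i) = p + r" "h (q'+i) = q + r" "r + 1 < c" using hp IH lt r_def by auto
        have "x (p + (r+1)) = x (q + (r+1))" using w[of "r+1"] r by simp
        then have "f (x (p'+i)) = f (x (q'+i))" using x_h1[of "p'+i"] x_h1[of "q'+i"] r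
          by (simp add: add.assoc)
        then have eq: "x (p'+i) = x (q'+i)" by (rule f_inj)
        have "h (q' + Suc i) + p = h (p' + Suc i) + q"
          using h_Suc[of "q'+i"] h_Suc[of "p'+i"] eq IH by simp
        then show ?case using IH eq less_Suc_eq by auto
      qed
    qed
    have c'c: "c' < c" using c'le False by simp
    have agp': "agree p' c'"
      using less.IH[OF c'c p'1 q'1 prev] claim[of c'] by simp
    have hadd: "h (p' + c') = p + h c'" using h_add[OF agp'] p' by simp
    have agh: "agree p (h c')" using agree_h[OF agp'] p' by simp
    show ?thesis unfolding agree_def
    proof (intro allI impI)
      fix i assume i: "i < c"
      show "x (p + i) = x i"
      proof (cases "i < h c'")
        case True then show ?thesis using agh unfolding agree_def by simp
      next
        case False
        then have "i = h c'" using c'ex hadd i by simp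
        then show ?thesis using x_hA[of "p'+c'"] x_hA[of c'] hadd by simp
      qed
    qed
  qed
qed

lemma BACK:
  assumes "e1 < e2" "s \<le> e1" "\<forall>i<s. x (e1-s+i) = x (e2-s+i)"
  shows "\<exists>c. s \<le> c \<and> c \<le> e1 \<and> agree (e1 - c) c \<and> agree (e2 - c) c"
proof -
  define C where "C = {c. c \<le> e1 \<and> (\<forall>i<c. x (e1-c+i) = x (e2-c+i))}"
  have fin: "finite C" unfolding C_def by simp
  have sC: "s \<in> C" using assms unfolding C_def by simp
  define c where "c = Max C"
  have cC: "c \<in> C" unfolding c_def using fin sC by (intro Max_in) auto
  have sc: "s \<le> c" unfolding c_def using fin sC by simp
  have ce: "c \<le> e1" and win: "\<forall>i<c. x (e1-c+i) = x (e2-c+i)" using cC unfolding C_def by auto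
  show ?thesis
  proof (cases "c = e1")
    case True
    have "agree (e2 - e1) e1" unfolding agree_def using win True by simp
    moreover have "agree 0 e1" by (simp add: agree_def)
    ultimately show ?thesis using True sc by auto
  next
    case False
    then have c1: "c < e1" using ce by simp
    have "x (e1-c-1) \<noteq> x (e2-c-1)"
    proof
      assume eq: "x (e1-c-1) = x (e2-c-1)"
      have "Suc c \<in> C" unfolding C_def
      proof (intro CollectI conjI allI impI)
        show "Suc c \<le> e1" using c1 by simp
        fix i assume i: "i < Suc c"
        show "x (e1 - Suc c + i) = x (e2 - Suc c + i)"
        proof (cases i)
          case 0 then show ?thesis using eq by simp
        next
          case (Suc i')
          then have "e1 - Suc c + i = e1 - c + i'" "e2 - Suc c + i = e2 - c + i'" "i' < c"
            using c1 assms(1) i by auto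
          then show ?thesis using win by simp
        qed
      qed
      then have "Suc c \<le> c" unfolding c_def using fin by simp
      then show False by simp
    qed
    then have "x ((e1-c)-1) \<noteq> x ((e2-c)-1)" by simp
    moreover have "\<forall>i<c. x ((e1-c)+i) = x ((e2-c)+i)" using win by simp
    ultimately have ag: "agree (e1 - c) c" using R1[of "e1-c" "e2-c"] c1 assms(1) by simp
    have "agree (e2 - c) c" using ag win unfolding agree_def by simp
    then show ?thesis using ag sc ce by auto
  qed
qed

lemma OCC:
  assumes "s \<le> n"
  shows "(\<exists>e. e < n \<and> s \<le> e \<and> (\<forall>i<s. x (e-s+i) = x (n-s+i))) \<longleftrightarrow>
         (\<exists>j. 1 \<le> j \<and> j \<le> n - s \<and> agree j (n-j))"
proof
  assume "\<exists>e. e < n \<and> s \<le> e \<and> (\<forall>i<s. x (e-s+i) = x (n-s+i))"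
  then obtain e where e: "e < n" "s \<le> e" "\<forall>i<s. x (e-s+i) = x (n-s+i)" by blast
  from BACK[OF e] obtain c where c: "s \<le> c" "c \<le> e" "agree (n - c) c" by blast
  then show "\<exists>j. 1 \<le> j \<and> j \<le> n - s \<and> agree j (n-j)" using e
    by (intro exI[of _ "n - c"]) auto
next
  assume "\<exists>j. 1 \<le> j \<and> j \<le> n - s \<and> agree j (n-j)"
  then obtain j where j: "1 \<le> j" "j \<le> n - s" "agree j (n-j)" by blast
  show "\<exists>e. e < n \<and> s \<le> e \<and> (\<forall>i<s. x (e-s+i) = x (n-s+i))"
  proof (intro exI conjI allI impI)
    show "n - j < n" "s \<le> n - j" using j assms by auto
    fix i assume i: "i < s"
    have k: "n-j-s+i < n-j" using j i assms by simp
    have x1: "x (j + (n-j-s+i)) = x (n-j-s+i)" using j(3) k unfolding agree_def by blast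
    have eq: "j + (n-j-s+i) = n - s + i" using j i assms by simp
    have "x (n - s + i) = x (j + (n-j-s+i))" by (simp only: eq)
    then show "x (n - j - s + i) = x (n - s + i)" using x1 by simp
  qed
qed

lemma SQ:
  assumes "1 \<le> l" "2*l \<le> n"
  shows "(\<forall>i<l. x (n-2*l+i) = x (n-l+i)) \<longleftrightarrow>
         (\<exists>j2. j2 + 2*l \<le> n \<and> agree (j2+l) (n-(j2+l)) \<and> agree j2 (n-(j2+l)))"
proof
  assume a: "\<forall>i<l. x (n-2*l+i) = x (n-l+i)"
  have "\<forall>i<l. x ((n-l)-l+i) = x (n-l+i)" using a by (simp add: diff_diff_add mult_2)
  moreover have "n - l < n" "l \<le> n - l" using assms by auto
  ultimately obtain c where
    c: "l \<le> c" "c \<le> n - l" "agree (n - l - c) c" "agree (n - c) c" using BACK[of "n-l" n l] by blast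
  show "\<exists>j2. j2 + 2*l \<le> n \<and> agree (j2+l) (n-(j2+l)) \<and> agree j2 (n-(j2+l))"
    using c assms by (intro exI[of _ "n - l - c"]) (auto simp: mult_2)
next
  assume "\<exists>j2. j2 + 2*l \<le> n \<and> agree (j2+l) (n-(j2+l)) \<and> agree j2 (n-(j2+l))"
  then obtain j2 where j: "j2 + 2*l \<le> n" "agree (j2+l) (n-(j2+l))" "agree j2 (n-(j2+l))" by blast
  show "\<forall>i<l. x (n-2*l+i) = x (n-l+i)"
  proof (intro allI impI)
    fix i assume i: "i < l"
    define L where "L = n - (j2 + l)"
    have Ll: "l \<le> L" using j(1) L_def by simp
    have k: "L - l + i < L" using i Ll by simp
    have "x (j2 + (L-l+i)) = x (L-l+i)" using j(3) k unfolding agree_def L_def by simp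
    moreover have "x (j2 + l + (L-l+i)) = x (L-l+i)" using j(2) k unfolding agree_def L_def by simp
    moreover have "j2 + (L-l+i) = n-2*l+i" "j2 + l + (L-l+i) = n-l+i" using L_def j(1) i Ll by auto
    ultimately show "x (n-2*l+i) = x (n-l+i)" by simp
  qed
qed

definition SQi :: "nat \<Rightarrow> nat \<Rightarrow> bool" where
  "SQi n l = (\<forall>i<l. x (n-2*l+i) = x (n-l+i))"
definition NEWi :: "nat \<Rightarrow> nat \<Rightarrow> bool" where
  "NEWi n l = (\<not> (\<exists>e. e < n \<and> 2*l \<le> e \<and> (\<forall>i<2*l. x (e-2*l+i) = x (n-2*l+i))))"

lemma drop_pre: "a \<le> n \<Longrightarrow> drop a (pre n) = map x [a..<n]"
  by (simp add: pre_def drop_map)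

lemma sublist_pre: "sublist u (pre m) \<longleftrightarrow> (\<exists>e. length u \<le> e \<and> e \<le> m \<and> u = map x [e - length u..<e])"
proof
  assume "sublist u (pre m)"
  then obtain ps ss where e: "pre m = ps @ u @ ss" by (auto simp: sublist_def)
  define e where "e = length ps + length u"
  have "m = length ps + length u + length ss" using arg_cong[OF e, of length] by simp
  then have em: "e \<le> m" using e_def by simp
  have "u = map x [e - length u..<e]"
  proof (rule nth_equalityI)
    show "length u = length (map x [e - length u..<e])" using e_def by simp
    fix i assume i: "i < length u"
    have "x (length ps + i) = (u @ ss) ! i" using pre_split_nth[OF e, of i] i by simp
    then show "u ! i = map x [e - length u..<e] ! i" using i e_def by (simp add: nth_append)
  qed
  then show "\<exists>e. length u \<le> e \<and> e \<le> m \<and> u = map x [e - length u..<e]" using em e_def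
    by (intro exI[of _ e]) simp
next
  assume "\<exists>e. length u \<le> e \<and> e \<le> m \<and> u = map x [e - length u..<e]"
  then obtain e where e: "length u \<le> e" "e \<le> m" "u = map x [e - length u..<e]" by blast
  have s1: "[0..<e] = [0..<e - length u] @ [e - length u..<e]"
    using upt_add_eq_append[of 0 "e - length u" "length u"] e by simp
  have s2: "[0..<m] = [0..<e] @ [e..<m]"
    using upt_add_eq_append[of 0 e "m - e"] e by simp
  have "[0..<m] = [0..<e - length u] @ [e - length u..<e] @ [e..<m]" using s1 s2 by simp
  then have "pre m = map x [0..<e - length u] @ u @ map x [e..<m]" using e unfolding pre_def by simp
  then show "sublist u (pre m)" unfolding sublist_def by blast
qed

definition W :: "nat \<Rightarrow> letter list set" where
  "W n = {w. w \<noteq> [] \<and> suffix (w @ w) (pre n) \<and> \<not> sublist (w @ w) (pre (n - 1))}"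

definition Lset :: "nat \<Rightarrow> nat set" where
  "Lset n = {l. 1 \<le> l \<and> 2*l \<le> n \<and> SQi n l \<and> NEWi n l}"

lemma acount_W: "acount n = card (W n)"
  by (simp add: acount_def W_def tpref_pre)

lemma suffix_ww: "suffix (w @ w) (pre n) \<longleftrightarrow> 2 * length w \<le> n \<and> w @ w = map x [n - 2*length w..<n]"
proof
  assume "suffix (w @ w) (pre n)"
  then obtain zs where z: "pre n = zs @ (w @ w)" by (auto simp: suffix_def)
  then have ln: "length zs + 2 * length w = n" by (metis length_append length_pre mult_2)
  have "drop (length zs) (pre n) = w @ w" using z by simp
  moreover have lz: "length zs = n - 2 * length w" using ln by simp
  ultimately show "2 * length w \<le> n \<and> w @ w = map x [n - 2*length w..<n]" using ln drop_pre[of "length zs" n]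
    by simp
next
  assume a: "2 * length w \<le> n \<and> w @ w = map x [n - 2*length w..<n]"
  have "pre n = take (n - 2*length w) (pre n) @ drop (n - 2*length w) (pre n)" by simp
  also have "drop (n - 2*length w) (pre n) = w @ w" using a drop_pre[of "n - 2*length w" n] by simp
  finally show "suffix (w @ w) (pre n)" unfolding suffix_def by blast
qed

lemma ww_SQi: "2 * length w \<le> n \<Longrightarrow> w @ w = map x [n - 2*length w..<n] \<Longrightarrow>
   SQi n (length w) \<and> w = map x [n - length w..<n]"
proof -
  assume l: "2 * length w \<le> n" and e: "w @ w = map x [n - 2*length w..<n]"
  have s: "SQi n (length w)" unfolding SQi_def
  proof (intro allI impI)
    fix i assume i: "i < length w"
    have "map x [n - 2*length w..<n] ! i = x (n - 2*length w + i)" using i l by simp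
    then have "(w @ w) ! i = x (n - 2*length w + i)" using e by simp
    moreover have "map x [n - 2*length w..<n] ! (length w + i) = x (n - 2*length w + (length w + i))"
      using i l by simp
    then have "(w @ w) ! (length w + i) = x (n - 2*length w + (length w + i))" using e by simp
    moreover have "n - 2*length w + (length w + i) = n - length w + i" using l by simp
    ultimately show "x (n - 2 * length w + i) = x (n - length w + i)" using i by (simp add: nth_append)
  qed
  have "w = drop (length w) (w @ w)" by simp
  also have "\<dots> = map x [n - length w..<n]" using e l by (simp add: drop_map)
  finally show ?thesis using s by simp
qed

lemma SQi_ww: "2 * l \<le> n \<Longrightarrow> SQi n l \<Longrightarrow>
   map x [n - l..<n] @ map x [n - l..<n] = map x [n - 2*l..<n]"
proof (rule nth_equalityI)
  assume l: "2*l \<le> n" and s: "SQi n l"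
  show "length (map x [n - l..<n] @ map x [n - l..<n]) = length (map x [n - 2*l..<n])" using l by simp
  fix i assume i: "i < length (map x [n - l..<n] @ map x [n - l..<n])"
  then have i2: "i < 2*l" using l by simp
  show "(map x [n - l..<n] @ map x [n - l..<n]) ! i = map x [n - 2*l..<n] ! i"
  proof (cases "i < l")
    case True then show ?thesis using s l unfolding SQi_def by (simp add: nth_append)
  next
    case False
    then have "i - l < l" using i2 by simp
    moreover have "n - l + (i - l) = n - 2*l + i" using False l i2 by simp
    ultimately show ?thesis using False l i2 by (simp add: nth_append)
  qed
qed

lemma NEW_sub: "2 * length w \<le> n \<Longrightarrow> w @ w = map x [n - 2*length w..<n] \<Longrightarrow> n \<ge> 1 \<Longrightarrow>
   sublist (w @ w) (pre (n - 1)) \<longleftrightarrow> \<not> NEWi n (length w)"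
proof -
  assume l: "2 * length w \<le> n" and e: "w @ w = map x [n - 2*length w..<n]" and n1: "n \<ge> 1"
  have "sublist (w @ w) (pre (n - 1)) \<longleftrightarrow>
        (\<exists>e'. 2*length w \<le> e' \<and> e' \<le> n - 1 \<and> map x [n - 2*length w..<n] = map x [e' - 2*length w..<e'])"
    unfolding sublist_pre length_append mult_2[symmetric] by (simp only: e)
  also have "\<dots> \<longleftrightarrow> (\<exists>e'. e' < n \<and> 2*length w \<le> e' \<and> (\<forall>i<2*length w. x (e'-2*length w+i) = x (n-2*length w+i)))"
  proof (intro iff_exI)
    fix e'
    show "(2*length w \<le> e' \<and> e' \<le> n - 1 \<and> map x [n - 2*length w..<n] = map x [e' - 2*length w..<e']) \<longleftrightarrow>
      (e' < n \<and> 2*length w \<le> e' \<and> (\<forall>i<2*length w. x (e'-2*length w+i) = x (n-2*length w+i)))"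
    proof
      assume a: "2*length w \<le> e' \<and> e' \<le> n - 1 \<and> map x [n - 2*length w..<n] = map x [e' - 2*length w..<e']"
      show "e' < n \<and> 2*length w \<le> e' \<and> (\<forall>i<2*length w. x (e'-2*length w+i) = x (n-2*length w+i))"
      proof (intro conjI allI impI)
        show "e' < n" "2*length w \<le> e'" using a n1 by auto
        fix i assume i: "i < 2*length w"
        have "map x [n - 2*length w..<n] ! i = map x [e' - 2*length w..<e'] ! i" using a by simp
        moreover have "map x [n - 2*length w..<n] ! i = x (n-2*length w+i)" using i l by simp
        moreover have "2*length w \<le> e'" using a by simp
        then have "e' - 2*length w + i < e'" using i by linarith
        then have "map x [e' - 2*length w..<e'] ! i = x (e'-2*length w+i)" by simp
        moreover note calculation
        ultimately show "x (e'-2*length w+i) = x (n-2*length w+i)" by simp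
      qed
    next
      assume a: "e' < n \<and> 2*length w \<le> e' \<and> (\<forall>i<2*length w. x (e'-2*length w+i) = x (n-2*length w+i))"
      have "map x [n - 2*length w..<n] = map x [e' - 2*length w..<e']"
        by (rule nth_equalityI) (use a l in auto)
      then show "2*length w \<le> e' \<and> e' \<le> n - 1 \<and> map x [n - 2*length w..<n] = map x [e' - 2*length w..<e']"
        using a by auto
    qed
  qed
  finally have fin: "sublist (w @ w) (pre (n - 1)) \<longleftrightarrow> (\<exists>e'. e' < n \<and> 2*length w \<le> e' \<and> (\<forall>i<2*length w. x (e'-2*length w+i) = x (n-2*length w+i)))" .
  then show ?thesis unfolding NEWi_def by blast
qed

lemma W_Lset: "n \<ge> 1 \<Longrightarrow> card (W n) = card (Lset n)"
proof -
  assume n1: "n \<ge> 1"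
  have key: "\<And>w. w \<in> W n \<Longrightarrow> 2 * length w \<le> n \<and> w @ w = map x [n - 2*length w..<n]"
    unfolding W_def using suffix_ww by blast
  have inj: "inj_on length (W n)"
  proof (rule inj_onI)
    fix w1 w2 assume w: "w1 \<in> W n" "w2 \<in> W n" "length w1 = length w2"
    from key[OF w(1)] have "w1 = map x [n - length w1..<n]" using ww_SQi by blast
    moreover from key[OF w(2)] have "w2 = map x [n - length w2..<n]" using ww_SQi by blast
    ultimately show "w1 = w2" using w(3) by simp
  qed
  have "length ` W n = Lset n"
  proof
    show "length ` W n \<subseteq> Lset n"
    proof
      fix l assume "l \<in> length ` W n"
      then obtain w where w: "w \<in> W n" "l = length w" by blast
      have k: "2 * length w \<le> n" "w @ w = map x [n - 2*length w..<n]" using key[OF w(1)] by auto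
      have "w \<noteq> []" "\<not> sublist (w @ w) (pre (n - 1))" using w(1) unfolding W_def by auto
      then show "l \<in> Lset n" unfolding Lset_def using k ww_SQi[OF k] NEW_sub[OF k n1] w(2)
        by (simp add: Suc_le_eq)
    qed
  next
    show "Lset n \<subseteq> length ` W n"
    proof
      fix l assume l: "l \<in> Lset n"
      then have l1: "1 \<le> l" "2*l \<le> n" "SQi n l" "NEWi n l" unfolding Lset_def by auto
      define w where "w = map x [n - l..<n]"
      have lw: "length w = l" using w_def l1 by simp
      have k: "2 * length w \<le> n" "w @ w = map x [n - 2*length w..<n]"
        using SQi_ww[OF l1(2,3)] lw w_def l1 by auto
      have "w \<in> W n" unfolding W_def using k suffix_ww[of w n] NEW_sub[OF k n1] l1 lw by auto
      then show "l \<in> length ` W n" using lw by force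
    qed
  qed
  then show ?thesis using card_image[OF inj] by simp
qed

lemma NEW_crit: "1 \<le> l \<Longrightarrow> 2*l \<le> n \<Longrightarrow> S k < n \<Longrightarrow> n \<le> S (Suc k) \<Longrightarrow>
   NEWi n l \<longleftrightarrow> n < 2*l + trib k"
proof -
  assume a: "1 \<le> l" "2*l \<le> n" "S k < n" "n \<le> S (Suc k)"
  have "NEWi n l \<longleftrightarrow> \<not> (\<exists>j. 1 \<le> j \<and> j \<le> n - 2*l \<and> agree j (n-j))"
    unfolding NEWi_def using OCC[of "2*l" n] a by simp
  also have "(\<exists>j. 1 \<le> j \<and> j \<le> n - 2*l \<and> agree j (n-j)) \<longleftrightarrow> trib k \<le> n - 2*l"
  proof
    assume "\<exists>j. 1 \<le> j \<and> j \<le> n - 2*l \<and> agree j (n-j)"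
    then obtain j where j: "1 \<le> j" "j \<le> n - 2*l" "agree j (n-j)" by blast
    have "n - j \<le> lcp j" using agree_iff[OF j(1)] j(3) by simp
    have "\<not> j < trib k"
    proof
      assume "j < trib k"
      then have "j + lcp j \<le> S k" using F2[of j k] j by simp
      then show False using \<open>n - j \<le> lcp j\<close> a j by simp
    qed
    then show "trib k \<le> n - 2*l" using j by simp
  next
    assume t: "trib k \<le> n - 2*l"
    have "n - trib k \<le> lcp (trib k)" using lcp_trib[of k] a S_Suc[of k] by simp
    then have "agree (trib k) (n - trib k)" using agree_iff[of "trib k"] trib_pos[of k] by simp
    then show "\<exists>j. 1 \<le> j \<and> j \<le> n - 2*l \<and> agree j (n-j)" using t trib_pos[of k]
      by (intro exI[of _ "trib k"]) auto
  qed
  finally show ?thesis using a by auto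
qed

lemma agree_0: "agree 0 L" by (simp add: agree_def)

lemma CL:
  assumes n1: "S (K+3) < n" and n2: "n \<le> S (K+4)" and l1: "1 \<le> l" and l2: "2*l \<le> n"
  shows "(SQi n l \<and> n < 2*l + trib (K+3)) \<longleftrightarrow>
    ((l = trib (K+3) \<and> 2*trib (K+3) \<le> n) \<or>
     (l = trib K \<and> n < trib (K+3) + 2*trib K) \<or>
     (l = trib (K+1) + trib K \<and> 2*trib (K+3) \<le> n + trib (K+2) \<and> n \<le> trib (K+3) + S (K+2)))"
proof -
  have tr: "trib (K+3) = trib (K+2) + trib (K+1) + trib K" by (rule trib_rec)
  have S3: "S (K+3) = trib (K+3) + S K" by (rule S3)
  have S4: "S (K+4) = S (K+3) + trib (K+3)" by (simp add: S_Suc numeral_eq_Suc)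
  note Sr = S_rel[of K]
  have lt0: "S K + 1 \<le> trib (K+1)" using S_lt[of K] by simp
  have lt1: "S (K+1) + 1 \<le> trib (K+2)" using S_lt[of "K+1"] by (simp add: numeral_eq_Suc)
  have lt2: "S (K+2) + 1 \<le> trib (K+3)" using S_lt[of "K+2"] by (simp add: numeral_eq_Suc)
  have ge0: "trib K \<le> S K + 1" by (rule S_ge)
  have lt20: "S K < 2 * trib K" by (rule S_lt2)
  have tp: "trib K \<ge> 1" "trib (K+1) \<ge> 1" "trib (K+2) \<ge> 1" "trib (K+3) \<ge> 1"
    using trib_pos[of K] trib_pos[of "K+1"] trib_pos[of "K+2"] trib_pos[of "K+3"] by auto
  have lk: "lcp (trib (K+3)) = S (K+3)" "lcp (trib (K+1)) = S (K+1)" "lcp (trib (K+2)) = S (K+2)"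
    "lcp (trib (K+2) + trib (K+1)) = S (K+1)"
    using lcp_trib lcp_trib2[of "K+1"] by (auto simp: numeral_eq_Suc)
  have ag_iff: "\<And>j L. j \<ge> 1 \<Longrightarrow> agree j L \<longleftrightarrow> L \<le> lcp j" using agree_iff by blast
  have sq: "SQi n l \<longleftrightarrow> (\<exists>j2. j2 + 2*l \<le> n \<and> agree (j2+l) (n-(j2+l)) \<and> agree j2 (n-(j2+l)))"
    unfolding SQi_def using SQ[OF l1 l2] .
  show ?thesis
  proof
    assume a: "SQi n l \<and> n < 2*l + trib (K+3)"
    then obtain j2 where j: "j2 + 2*l \<le> n" "agree (j2+l) (n-(j2+l))" "agree j2 (n-(j2+l))"
      using sq by blast
    have new: "n < 2*l + trib (K+3)" using a by simp
    define j1 where "j1 = j2 + l"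
    have j11: "j1 \<ge> 1" using l1 j1_def by simp
    have c1: "n - j1 \<le> lcp j1" using ag_iff[OF j11] j(2) j1_def by simp
    have j1t: "trib (K+3) \<le> j1"
    proof (rule ccontr)
      assume "\<not> trib (K+3) \<le> j1"
      then have "j1 + lcp j1 \<le> S (K+3)" using F2[of j1 "K+3"] j11 by simp
      then show False using c1 n1 j(1) j1_def by linarith
    qed
    have j2t: "j2 < trib (K+3)" using j(1) new by linarith
    have c2: "j2 \<ge> 1 \<Longrightarrow> n - j1 \<le> lcp j2" using ag_iff j(3) j1_def by simp
    show "(l = trib (K+3) \<and> 2*trib (K+3) \<le> n) \<or>
     (l = trib K \<and> n < trib (K+3) + 2*trib K) \<or>
     (l = trib (K+1) + trib K \<and> 2*trib (K+3) \<le> n + trib (K+2) \<and> n \<le> trib (K+3) + S (K+2))"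
    proof (cases "j1 = trib (K+3)")
      case True
      show ?thesis
      proof (cases "j2 = 0")
        case True
        then show ?thesis using \<open>j1 = trib (K+3)\<close> j1_def j(1) by simp
      next
        case False
        then have j21: "j2 \<ge> 1" by simp
        have "lcp j2 > S K" using c2[OF j21] True n1 S3 by linarith
        from LS[OF j21 j2t this] show ?thesis
        proof (elim disjE)
          assume e: "j2 = trib (K+1)"
          then have "S (K+1) \<ge> n - trib (K+3)" using c2[OF j21] True lk by simp
          moreover have "n \<ge> 2 * trib (K+3) - trib (K+1)" using j(1) e True j1_def by simp
          ultimately show ?thesis using tr lt1 Sr by linarith
        next
          assume e: "j2 = trib (K+2)"
          then have "S (K+2) \<ge> n - trib (K+3)" using c2[OF j21] True lk by simp
          moreover have "l = trib (K+1) + trib K" using e True j1_def tr by simp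
          moreover have "n + trib (K+2) \<ge> 2 * trib (K+3)" using j(1) e True j1_def by simp
          moreover have "n \<le> trib (K+3) + S (K+2)" using \<open>S (K+2) \<ge> n - trib (K+3)\<close> by linarith
          ultimately show ?thesis by simp
        next
          assume e: "j2 = trib (K+2) + trib (K+1)"
          then have "l = trib K" using True j1_def tr by simp
          then show ?thesis using new by simp
        qed
      qed
    next
      case False
      define d where "d = j1 - trib (K+3)"
      have d1: "d \<ge> 1" "j1 = trib (K+3) + d" using False j1t d_def by auto
      have nj: "n \<le> j1 + lcp j1" using c1 by simp
      show ?thesis
      proof (cases "j2 = 0")
        case True
        then have "l = j1" using j1_def by simp
        then have "2 * d \<le> S K" using j(1) True n2 S4 S3 d1 by simp
        then have dK: "d < trib K" using lt20 by simp
        have b: "d + lcp d \<le> S K" using F2[OF d1(1) dK] .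
        have "lcp j1 = lcp d" using shift[OF agree_trib[of "K+3"] d1(1)] b S3 tp d1 by simp
        then show ?thesis using nj b d1 n1 S3 by simp
      next
        case False
        then have j21: "j2 \<ge> 1" by simp
        have f2: "j2 + lcp j2 \<le> S (K+3)" using F2[OF j21 j2t] .
        have g: "j2 + lcp j2 \<ge> trib (K+3) + d" using c2[OF j21] j(1) j1_def d1 by simp
        have dS: "d \<le> S K" using f2 g S3 by simp
        have dK1: "d < trib (K+1)" using dS lt0 by simp
        have dK2: "d < trib (K+2)" using dK1 tr trib_mono[of "K+1" "K+2"] by simp
        have b2: "d + lcp d \<le> S (K+2)" using F2[OF d1(1) dK2] .
        have "lcp j1 = lcp d" using shift[OF agree_trib[of "K+3"] d1(1)] b2 S3 Sr tr tp d1 by simp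
        then have big: "d + lcp d > S K" using nj d1 n1 S3 by simp
        have dK: "d \<ge> trib K"
        proof (rule ccontr)
          assume "\<not> d \<ge> trib K"
          then have "d + lcp d \<le> S K" using F2[OF d1(1)] by simp
          then show False using big by simp
        qed
        have U1: "lcp d \<le> S K" using U[OF d1(1), of K] dK1 by simp
        have "j2 + lcp j2 \<ge> trib (K+3) + trib K" using g dK by simp
        from HG[OF j21 j2t this] show ?thesis
        proof (elim disjE)
          assume e: "j2 = trib (K+2)"
          have "lcp d + j1 \<ge> n" using nj \<open>lcp j1 = lcp d\<close> by simp
          moreover have "n \<ge> 2 * trib (K+3) + 2*d - trib (K+2)" using j(1) e j1_def d1 by simp
          ultimately show ?thesis using U1 tr d1 lt0 by linarith
        next
          assume e: "j2 = trib (K+2) + trib (K+1)"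
          have "lcp d + j1 \<ge> n" using nj \<open>lcp j1 = lcp d\<close> by simp
          moreover have "n \<ge> trib (K+3) + 2*d + trib K" using j(1) e j1_def d1 tr by simp
          ultimately show ?thesis using U1 dK lt20 d1 by linarith
        qed
      qed
    qed
  next
    assume b: "(l = trib (K+3) \<and> 2*trib (K+3) \<le> n) \<or>
     (l = trib K \<and> n < trib (K+3) + 2*trib K) \<or>
     (l = trib (K+1) + trib K \<and> 2*trib (K+3) \<le> n + trib (K+2) \<and> n \<le> trib (K+3) + S (K+2))"
    have agk: "agree (trib (K+3)) (n - trib (K+3))" using ag_iff[OF tp(4)] lk n2 S4 by simp
    from b show "SQi n l \<and> n < 2*l + trib (K+3)"
    proof (elim disjE conjE)
      assume e: "l = trib (K+3)" "2*trib (K+3) \<le> n"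
      have "SQi n l" unfolding sq using e agk agree_0 by (intro exI[of _ 0]) simp
      moreover have "n < 2*l + trib (K+3)" using e n2 S4 S3 lt0 lt1 tr by linarith
      ultimately show ?thesis by simp
    next
      assume e: "l = trib K" "n < trib (K+3) + 2*trib K"
      define j2 where "j2 = trib (K+2) + trib (K+1)"
      have j2l: "j2 + l = trib (K+3)" using e j2_def tr by simp
      have "j2 + 2*l \<le> n" using j2l e n1 S3 ge0 by simp
      moreover have "n - (j2+l) \<le> S (K+1)" using j2l e Sr ge0 by arith
      then have "agree j2 (n - (j2+l))" using ag_iff[of j2] j2_def tp lk by simp
      ultimately have "SQi n l" unfolding sq using agk j2l by (intro exI[of _ j2]) simp
      then show ?thesis using e by simp
    next
      assume e: "l = trib (K+1) + trib K" "2*trib (K+3) \<le> n + trib (K+2)" "n \<le> trib (K+3) + S (K+2)"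
      define j2 where "j2 = trib (K+2)"
      have j2l: "j2 + l = trib (K+3)" using e j2_def tr by simp
      have "j2 + 2*l \<le> n" using j2l e j2_def tr by simp
      moreover have "agree j2 (n - (j2+l))" using ag_iff[of j2] j2_def tp lk j2l e by simp
      ultimately have "SQi n l" unfolding sq using agk j2l by (intro exI[of _ j2]) simp
      moreover have "n < 2*l + trib (K+3)" using e Sr lt0 by simp
      ultimately show ?thesis by simp
    qed
  qed
qed

lemma Lset_char:
  assumes n1: "S (K+3) < n" and n2: "n \<le> S (K+4)"
  shows "Lset n = {l. (l = trib (K+3) \<and> 2*trib (K+3) \<le> n) \<or>
     (l = trib K \<and> n < trib (K+3) + 2*trib K) \<or>
     (l = trib (K+1) + trib K \<and> 2*trib (K+3) \<le> n + trib (K+2) \<and> n \<le> trib (K+3) + S (K+2))}"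
proof -
  have tr: "trib (K+3) = trib (K+2) + trib (K+1) + trib K" by (rule trib_rec)
  have S3: "S (K+3) = trib (K+3) + S K" by (rule S3)
  have ge0: "trib K \<le> S K + 1" by (rule S_ge)
  have tp: "trib K \<ge> 1" using trib_pos[of K] by simp
  show ?thesis
  proof (intro set_eqI iffI)
    fix l assume "l \<in> Lset n"
    then have l: "1 \<le> l" "2*l \<le> n" "SQi n l" "NEWi n l" unfolding Lset_def by auto
    have n2': "n \<le> S (Suc (K+3))" using n2 by (simp add: ac_simps)
    have "n < 2*l + trib (K+3)" using NEW_crit[OF l(1,2) n1 n2'] l(4) by simp
    then show "l \<in> {l. (l = trib (K+3) \<and> 2*trib (K+3) \<le> n) \<or>
     (l = trib K \<and> n < trib (K+3) + 2*trib K) \<or>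
     (l = trib (K+1) + trib K \<and> 2*trib (K+3) \<le> n + trib (K+2) \<and> n \<le> trib (K+3) + S (K+2))}"
      using CL[OF n1 n2 l(1,2)] l(3) by simp
  next
    fix l assume a: "l \<in> {l. (l = trib (K+3) \<and> 2*trib (K+3) \<le> n) \<or>
     (l = trib K \<and> n < trib (K+3) + 2*trib K) \<or>
     (l = trib (K+1) + trib K \<and> 2*trib (K+3) \<le> n + trib (K+2) \<and> n \<le> trib (K+3) + S (K+2))}"
    have l1: "1 \<le> l" using a trib_pos[of K] trib_pos[of "K+3"] by auto
    have l2: "2*l \<le> n" using a n1 S3 ge0 tr by auto
    have "SQi n l \<and> n < 2*l + trib (K+3)" using CL[OF n1 n2 l1 l2] a by simp
    moreover have n2': "n \<le> S (Suc (K+3))" using n2 by (simp add: ac_simps)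
    ultimately show "l \<in> Lset n" unfolding Lset_def using NEW_crit[OF l1 l2 n1 n2'] l1 l2 by simp
  qed
qed

lemma acount_K:
  assumes n1: "S (K+3) < n" and n2: "n \<le> S (K+4)"
  shows "acount n = 1 \<longleftrightarrow> (2*trib (K+3) \<le> n \<or> n < trib (K+3) + 2*trib K \<or>
     (2*trib (K+3) \<le> n + trib (K+2) \<and> n \<le> trib (K+3) + S (K+2)))"
proof -
  have tr: "trib (K+3) = trib (K+2) + trib (K+1) + trib K" by (rule trib_rec)
  have S3: "S (K+3) = trib (K+3) + S K" by (rule S3)
  have S4: "S (K+4) = S (K+3) + trib (K+3)" by (simp add: S_Suc numeral_eq_Suc)
  note Sr = S_rel[of K]
  have lt0: "S K + 1 \<le> trib (K+1)" using S_lt[of K] by simp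
  have lt2: "S (K+2) + 1 \<le> trib (K+3)" using S_lt[of "K+2"] by (simp add: numeral_eq_Suc)
  have ge0: "trib K \<le> S K + 1" by (rule S_ge)
  have tp: "trib K \<ge> 1" using trib_pos[of K] by simp
  have n0: "n \<ge> 1" using n1 by simp
  have ac: "acount n = card (Lset n)" using acount_W W_Lset[OF n0] by simp
  define C1 where "C1 = (2*trib (K+3) \<le> n)"
  define C2 where "C2 = (n < trib (K+3) + 2*trib K)"
  define C3 where "C3 = (2*trib (K+3) \<le> n + trib (K+2) \<and> n \<le> trib (K+3) + S (K+2))"
  have L: "Lset n = {l. (l = trib (K+3) \<and> C1) \<or> (l = trib K \<and> C2) \<or> (l = trib (K+1) + trib K \<and> C3)}"
    using Lset_char[OF n1 n2] unfolding C1_def C2_def C3_def .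
  have x12: "\<not> (C1 \<and> C2)" unfolding C1_def C2_def using tr trib_mono[of K "K+1"] by linarith
  have x13: "\<not> (C1 \<and> C3)" unfolding C1_def C3_def using lt2 by simp
  have x23: "\<not> (C2 \<and> C3)" unfolding C2_def C3_def using tr trib_mono[of K "K+1"] by linarith
  have "card (Lset n) = (if C1 \<or> C2 \<or> C3 then 1 else 0)"
  proof (cases C1)
    case True then have "Lset n = {trib (K+3)}" using L x12 x13 by auto
    then show ?thesis using True by simp
  next
    case f1: False
    show ?thesis
    proof (cases C2)
      case True then have "Lset n = {trib K}" using L x12 x23 f1 by auto
      then show ?thesis using True by simp
    next
      case f2: False
      show ?thesis
      proof (cases C3)
        case True then have "Lset n = {trib (K+1) + trib K}" using L f1 f2 by auto
        then show ?thesis using True by simp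
      next
        case False then have "Lset n = {}" using L f1 f2 by auto
        then show ?thesis using False f1 f2 by simp
      qed
    qed
  qed
  then show ?thesis using ac unfolding C1_def C2_def C3_def by simp
qed

lemma small_noSQ: "n \<le> 7 \<Longrightarrow> 1 \<le> l \<Longrightarrow> 2*l \<le> n \<Longrightarrow> \<not> SQi n l"
proof
  assume a: "n \<le> 7" "1 \<le> l" "2*l \<le> n" and s: "SQi n l"
  have f0: "x (n-2*l) = x (n-l)" using spec[OF s[unfolded SQi_def], of 0] a by simp
  have f1: "l \<ge> 2 \<Longrightarrow> x (n-2*l+1) = x (n-l+1)" using spec[OF s[unfolded SQi_def], of 1] by simp
  have "l = 1 \<or> l = 2 \<or> l = 3" using a by linarith
  moreover have "n = 2 \<or> n = 3 \<or> n = 4 \<or> n = 5 \<or> n = 6 \<or> n = 7" using a by linarith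
  ultimately show False using f0 f1 x_small a(3) by auto
qed

lemma small_acount: "1 \<le> n \<Longrightarrow> n \<le> 7 \<Longrightarrow> acount n = 0"
proof -
  assume n: "1 \<le> n" "n \<le> 7"
  have "Lset n = {}" unfolding Lset_def using small_noSQ n by auto
  then show ?thesis using acount_W W_Lset[OF n(1)] by simp
qed

lemma S_ge_id: "S k \<ge> k"
proof (induction k)
  case (Suc k) then show ?case using trib_pos[of k] by (simp add: S_Suc)
qed simp

lemma find_K: "n > S 3 \<Longrightarrow> \<exists>K. S (K+3) < n \<and> n \<le> S (K+4)"
proof -
  assume n: "n > S 3"
  define k0 where "k0 = (LEAST k. n \<le> S k)"
  have ex: "n \<le> S k0" unfolding k0_def by (rule LeastI[of _ n]) (rule S_ge_id)
  have k0: "k0 > 3"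
  proof (rule ccontr)
    assume "\<not> k0 > 3" then have "S k0 \<le> S 3" using S_mono by simp
    then show False using ex n by simp
  qed
  have "\<not> n \<le> S (k0 - 1)" using not_less_Least[of "k0 - 1" "\<lambda>k. n \<le> S k"] k0 unfolding k0_def by simp
  moreover obtain K where K: "k0 = K + 4" using k0 that[of "k0 - 4"] by simp
  ultimately show ?thesis using ex by (intro exI[of _ K]) (simp add: ac_simps)
qed

lemma m_unique: "2 * trib (a - 1) \<le> n \<Longrightarrow> n < 2 * trib a \<Longrightarrow>
  2 * trib (b - 1) \<le> n \<Longrightarrow> n < 2 * trib b \<Longrightarrow> a = b"
proof (rule ccontr)
  assume a: "2 * trib (a - 1) \<le> n" "n < 2 * trib a" "2 * trib (b - 1) \<le> n" "n < 2 * trib b" "a \<noteq> b"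
  have mono: "\<And>p q. p \<le> q \<Longrightarrow> trib p \<le> trib q"
  proof -
    fix p q :: nat assume "p \<le> q"
    then show "trib p \<le> trib q" using trib_mono[of p q] by (cases "p = q") auto
  qed
  show False
  proof (cases "a < b")
    case True then have "a \<le> b - 1" by simp
    then show ?thesis using mono[of a "b-1"] a by simp
  next
    case False then have "b \<le> a - 1" using a(5) by simp
    then show ?thesis using mono[of b "a-1"] a by simp
  qed
qed

lemma S_small: "S 1 = 1" "S 2 = 3" "S 3 = 7" "S 4 = 14"
proof -
  show s1: "S 1 = 1" using S_Suc[of 0] by simp
  show s2: "S 2 = 3" by (simp add: S_def numeral_2_eq_2 lessThan_Suc)
  show s3: "S 3 = 7" using S_Suc[of 2] s2 by simp
  show "S 4 = 14" using S_Suc[of 3] s3 by simp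
qed

theorem mainTheorem4:
  shows "(\<forall>n::nat. 1 \<le> n \<and> n < 14 \<longrightarrow> (acount n = 1 \<longleftrightarrow> n \<in> {8, 10}))
    \<and> (\<forall>n m::nat. 14 \<le> n \<and> 2 * trib (m - 1) \<le> n \<and> n < 2 * trib m \<longrightarrow>
          4 \<le> m \<and>
          (acount n = 1 \<longleftrightarrow>
             n \<in> {2 * trib (m - 1) .. trib m + 2 * trib (m - 3) - 1}
                 \<union> {2 * trib m - trib (m - 1) .. (3 * trib m + trib (m - 2) - 3) div 2}))"
proof (rule conjI)
  show "\<forall>n::nat. 1 \<le> n \<and> n < 14 \<longrightarrow> (acount n = 1 \<longleftrightarrow> n \<in> {8, 10})"
  proof (intro allI impI)
  fix n :: nat assume n: "1 \<le> n \<and> n < 14"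
  show "acount n = 1 \<longleftrightarrow> n \<in> {8, 10}"
  proof (cases "n \<le> 7")
    case True then show ?thesis using small_acount[of n] n by simp
  next
    case False
    then have a: "S (0+3) < n" "n \<le> S (0+4)" using n S_small by auto
    have s2: "S (Suc (Suc 0)) = 3" using S_small(2) by (simp add: numeral_2_eq_2)
    show ?thesis using acount_K[OF a] False n S_small s2 by auto
  qed
  qed
next
  show "\<forall>n m::nat. 14 \<le> n \<and> 2 * trib (m - 1) \<le> n \<and> n < 2 * trib m \<longrightarrow>
          4 \<le> m \<and>
          (acount n = 1 \<longleftrightarrow>
             n \<in> {2 * trib (m - 1) .. trib m + 2 * trib (m - 3) - 1}
                 \<union> {2 * trib m - trib (m - 1) .. (3 * trib m + trib (m - 2) - 3) div 2})"
  proof (intro allI impI)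
  fix n m :: nat assume a: "14 \<le> n \<and> 2 * trib (m - 1) \<le> n \<and> n < 2 * trib m"
  have "n > S 3" using a S_small by simp
  then obtain K where K: "S (K+3) < n" "n \<le> S (K+4)" using find_K by blast
  have tr: "trib (K+3) = trib (K+2) + trib (K+1) + trib K" by (rule trib_rec)
  have tr4: "trib (K+4) = trib (K+3) + trib (K+2) + trib (K+1)" using trib_rec[of "K+1"]
    by (simp add: numeral_eq_Suc)
  have S4: "S (K+4) = trib (K+4) + S (K+1)" using S3[of "K+1"] by (simp add: numeral_eq_Suc)
  have S3: "S (K+3) = trib (K+3) + S K" by (rule S3)
  have S4': "S (K+4) = S (K+3) + trib (K+3)" by (simp add: S_Suc numeral_eq_Suc)
  have lt0: "S K + 1 \<le> trib (K+1)" using S_lt[of K] by simp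
  have lt21: "S (K+1) < 2 * trib (K+1)" using S_lt2[of "K+1"] by simp
  have tpos: "trib K \<ge> 1" using trib_pos[of K] by simp
  have m12: "trib (K+1) \<le> trib (K+2)" using trib_mono[of "K+1" "K+2"] by simp
  note ac = acount_K[OF K]
  show "4 \<le> m \<and>
          (acount n = 1 \<longleftrightarrow>
             n \<in> {2 * trib (m - 1) .. trib m + 2 * trib (m - 3) - 1}
                 \<union> {2 * trib m - trib (m - 1) .. (3 * trib m + trib (m - 2) - 3) div 2})"
  proof (cases "2 * trib (K+3) \<le> n")
    case True
    have up: "n < 2 * trib (K+4)" using K S4' S3 tr4 lt0 m12 by linarith
    have "K + 4 - 1 = K + 3" by simp
    then have "2 * trib (K + 4 - 1) \<le> n" using True by (simp only:)
    then have m: "m = K + 4" using m_unique[of m n "K+4"] a up by blast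
    have "n \<le> trib (K+4) + 2 * trib (K+1) - 1" using K S4 lt21 by linarith
    then have mem: "n \<in> {2 * trib (K+3) .. trib (K+4) + 2 * trib (K+1) - 1}" using True by simp
    have mm: "m - 1 = K + 3" "m - 3 = K + 1" using m by auto
    show ?thesis unfolding mm using mem ac True m by auto
  next
    case False
    have K1: "K \<ge> 1"
    proof (rule ccontr)
      assume "\<not> K \<ge> 1" then have "K = 0" by simp
      then show False using K a False S_small by simp
    qed
    then obtain K' where K': "K = K' + 1" by (metis add.commute le_Suc_ex)
    have f1: "S (K'+1) = S K' + trib K'" by (simp add: S_Suc)
    have f2: "trib (K'+3) = trib (K'+2) + trib (K'+1) + trib K'" by (rule trib_rec)
    have ks: "K+2 = K'+3" "K+1 = K'+2" "K = K'+1" using K' by auto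
    have f1': "S K = S K' + trib K'" using f1 ks by (simp only:)
    have f2': "trib (K+2) = trib (K+1) + trib K + trib K'" using f2 ks by (simp only:)
    have lowK: "2 * trib (K+2) \<le> n" using K(1) S3 tr f1' f2' by linarith
    have "K + 3 - 1 = K + 2" by simp
    then have "2 * trib (K + 3 - 1) \<le> n" using lowK by (simp only:)
    then have m: "m = K + 3" using m_unique[of m n "K+3"] a False by auto
    have sd: "2 * S (K+2) + 3 = trib (K+3) + trib (K+1)" by (rule S_div)
    have dv: "(3 * trib (K+3) + trib (K+1) - 3) div 2 = trib (K+3) + S (K+2)" using sd by simp
    have e2: "2 * trib (K+3) - trib (K+2) \<le> n \<longleftrightarrow> 2 * trib (K+3) \<le> n + trib (K+2)"
      using trib_mono[of "K+2" "K+3"] by arith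
    have mm: "m - 1 = K + 2" "m - 2 = K + 1" "m - 3 = K" using m by auto
    have A: "n \<in> {2*trib (K+2) .. trib (K+3) + 2*trib K - 1} \<longleftrightarrow> n < trib (K+3) + 2*trib K"
      using lowK tpos by auto
    have B: "n \<in> {2 * trib (K+3) - trib (K+2) .. (3*trib (K+3) + trib (K+1) - 3) div 2} \<longleftrightarrow>
      (2*trib (K+3) \<le> n + trib (K+2) \<and> n \<le> trib (K+3) + S (K+2))" using dv e2 by auto
    have "acount n = 1 \<longleftrightarrow>
             n \<in> {2 * trib (K+2) .. trib (K+3) + 2 * trib K - 1}
                 \<union> {2 * trib (K+3) - trib (K+2) .. (3 * trib (K+3) + trib (K+1) - 3) div 2}"
      using ac False A B by blast
    then show ?thesis unfolding mm using m K1 by simp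
  qed
  qed
qed

end
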